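(* Let $p$ be an odd prime, $K$ a field of characteristic $p$, $s\geq1$ an integer, and $n=1+p^s$. Let $X$ be the $n\times n$ matrix with entries $1$ in positions $(i,i+1)$, $1\leq i\leq n-1$, and $0$ elsewhere, and let $B=1+X$. Let $k$ be an integer with $1\leq k\leq s$, and let $A$ be the unique matrix in $\mathrm{U}_n(K)$ whose last column is zero except for the entry $1$ in position $(n,n)$ and which satisfies $ABA^{-1}=B^{1+p^k}$. Then the order of $A$ is $p^{s+1-k}$.
   Context: $\mathrm{U}_n(K)$ is the group of upper-triangular unipotent $n\times n$ matrices over $K$. (The existence and uniqueness of such $A$ is part of the setup.) *)

theory Defs
  imports "Jordan_Normal_Form.Matrix"
begin

(* Matrices are 0-indexed: entry (i,j) of the paper is A $$ (i-1, j-1). *)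

definition unitriangular_mat :: "nat \<Rightarrow> 'a :: field mat set" where
  "unitriangular_mat n = {A. A \<in> carrier_mat n n \<and>
      (\<forall>i<n. A $$ (i,i) = 1) \<and> (\<forall>i<n. \<forall>j<n. j < i \<longrightarrow> A $$ (i,j) = 0)}"

definition shift_mat :: "nat \<Rightarrow> 'a :: field mat" where
  "shift_mat n = mat n n (\<lambda>(i,j). if j = i + 1 then 1 else 0)"

definition mat_order :: "nat \<Rightarrow> 'a :: field mat \<Rightarrow> nat" where
  "mat_order n A = (LEAST m. 0 < m \<and> A ^\<^sub>m m = 1\<^sub>m n)"

end

theory Submission
  imports Defs "HOL-Computational_Algebra.Primes" "HOL-Computational_Algebra.Polynomial" "HOL-Number_Theory.Cong"
begin


lemma pow_cong_lin: "[(x::int)^i = 1 + int i * (x - 1)] (mod (x-1)^2)"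
proof (induction i)
  case 0 then show ?case by simp
next
  case (Suc i)
  have "[x^Suc i = x * (1 + int i * (x - 1))] (mod (x-1)^2)"
    using cong_mult[OF cong_refl[of x] Suc.IH] by simp
  moreover have "x * (1 + int i * (x - 1)) = 1 + int (Suc i) * (x - 1) + int i * (x-1)^2"
    by (simp add: algebra_simps power2_eq_square)
  moreover have "[1 + int (Suc i) * (x - 1) + int i * (x-1)^2 = 1 + int (Suc i) * (x - 1)] (mod (x-1)^2)"
    by (simp add: cong_iff_dvd_diff)
  ultimately show ?case using cong_trans by metis
qed

lemma sum_odd: "2 * (\<Sum>i<n. int i) = int n * (int n - 1)"
  by (induction n) (auto simp: algebra_simps)

lemma lte_step:
  fixes p :: nat and x y :: int
  assumes p: "prime p" "odd p" and e: "e \<ge> 1" and x: "x = 1 + int p ^ e * y" and y: "\<not> int p dvd y"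
  shows "\<exists>z. x ^ p = 1 + int p ^ (e+1) * z \<and> \<not> int p dvd z"
proof -
  define d where "d = x - 1"
  have dd: "d = int p * (int p ^ (e-1) * y)" using x e unfolding d_def
    by (metis add_diff_cancel_left' mult.assoc power_eq_if not_one_le_zero)
  define S where "S = (\<Sum>i<p. x^i)"
  have xp: "x^p - 1 = d * S" unfolding d_def S_def
    by (simp add: power_diff_1_eq)
  have c1: "[S = (\<Sum>i<p. 1 + int i * d)] (mod d^2)"
    unfolding S_def d_def by (rule cong_sum) (use pow_cong_lin in auto)
  obtain r where r: "p = 2*r+1" using p(2) oddE by blast
  have "2 * (\<Sum>i<p. int i) = 2 * (int p * int r)" using sum_odd[of p] r by simp
  hence sr: "(\<Sum>i<p. int i) = int p * int r" by simp
  have "(\<Sum>i<p. 1 + int i * d) = int p + d * (\<Sum>i<p. int i)"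
    by (simp add: sum.distrib sum_distrib_left mult.commute)
  also have "\<dots> = int p + int p ^ 2 * (int p ^ (e-1) * y * int r)"
    using sr dd by (simp add: power2_eq_square algebra_simps)
  finally have c2: "(\<Sum>i<p. 1 + int i * d) = int p + int p ^ 2 * (int p ^ (e-1) * y * int r)" .
  have "int p ^ 2 dvd d^2" using dd by simp
  hence "[S = (\<Sum>i<p. 1 + int i * d)] (mod int p ^ 2)" using c1 cong_dvd_modulus by blast
  hence "int p ^ 2 dvd S - (\<Sum>i<p. 1 + int i * d)" by (simp add: cong_iff_dvd_diff)
  then obtain t where "S - (\<Sum>i<p. 1 + int i * d) = int p ^ 2 * t" by blast
  hence St: "S = int p * (1 + int p * (int p ^ (e-1) * y * int r + t))"
    using c2 by (simp add: algebra_simps power2_eq_square)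
  define u where "u = int p ^ (e-1) * y * int r + t"
  define z where "z = y * (1 + int p * u)"
  have "x ^ p = 1 + d * S" using xp by simp
  also have "\<dots> = 1 + int p ^ (e+1) * z"
    using St unfolding u_def z_def d_def x
    by (simp add: algebra_simps power_add)
  finally have 1: "x ^ p = 1 + int p ^ (e+1) * z" .
  have pp: "prime (int p)" using p by simp
  have "\<not> int p dvd 1 + int p * u"
  proof
    assume "int p dvd 1 + int p * u"
    hence "int p dvd 1" by (simp add: dvd_add_left_iff)
    thus False using pp by (simp add: prime_int_iff)
  qed
  hence "\<not> int p dvd z" unfolding z_def using y pp by (simp add: prime_dvd_mult_iff)
  with 1 show ?thesis by blast
qed

lemma lte_iter_int:
  fixes p k :: nat
  assumes p: "prime p" "odd p" and k: "k \<ge> 1"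
  shows "\<exists>z. (1 + int p ^ k) ^ (p ^ j) = 1 + int p ^ (k + j) * z \<and> \<not> int p dvd z"
proof (induction j)
  case 0
  have "p \<noteq> 1" using p(1) by auto
  hence "\<not> int p dvd 1" by simp
  then show ?case by (intro exI[of _ 1]) simp
next
  case (Suc j)
  then obtain z where z: "(1 + int p ^ k) ^ (p ^ j) = 1 + int p ^ (k + j) * z" "\<not> int p dvd z" by blast
  from lte_step[OF p _ z(1) z(2)] k obtain w where
    w: "((1 + int p ^ k) ^ (p ^ j)) ^ p = 1 + int p ^ (k + j + 1) * w \<and> \<not> int p dvd w" by auto
  have "(1 + int p ^ k) ^ (p ^ Suc j) = ((1 + int p ^ k) ^ (p ^ j)) ^ p"
    by (simp add: power_mult[symmetric] mult.commute)
  then show ?case using w by (intro exI[of _ w]) simp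
qed

lemma lte_iter:
  fixes p k :: nat
  assumes p: "prime p" "odd p" and k: "k \<ge> 1"
  shows "\<exists>z. (1 + p ^ k) ^ (p ^ j) = 1 + p ^ (k + j) * z \<and> \<not> p dvd z"
proof -
  obtain z where z: "(1 + int p ^ k) ^ (p ^ j) = 1 + int p ^ (k + j) * z" "\<not> int p dvd z"
    using lte_iter_int[OF p k] by blast
  have "(1 + int p ^ k) ^ (p ^ j) \<ge> 1" by simp
  hence "int p ^ (k + j) * z \<ge> 0" using z by linarith
  moreover have "int p ^ (k+j) > 0" using p by (simp add: prime_gt_0_nat)
  ultimately have z0: "z \<ge> 0" by (simp add: zero_le_mult_iff)
  have "int ((1 + p ^ k) ^ (p ^ j)) = int (1 + p ^ (k + j) * nat z)" using z z0 by simp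
  hence "(1 + p ^ k) ^ (p ^ j) = 1 + p ^ (k + j) * nat z" by (simp only: of_nat_eq_iff)
  moreover have "\<not> p dvd nat z" using z(2) z0
    by (metis int_dvd_int_iff nat_0_le)
  ultimately show ?thesis by blast
qed

lemma choose_char:
  assumes "prime CHAR('a::field)" "0 < d" "d < CHAR('a) ^ j"
  shows "(of_nat (CHAR('a) ^ j choose d) :: 'a) = 0"
proof -
  have "([:1,1:] :: 'a poly) = monom 1 1 + 1" by (simp add: monom_altdef one_pCons)
  hence "([:1,1:] :: 'a poly) ^ (CHAR('a) ^ j) = monom 1 1 ^ (CHAR('a) ^ j) + 1 ^ (CHAR('a) ^ j)"
  proof -
    have "prime CHAR('a poly)" using assms(1) by simp
    hence "(monom 1 1 + 1 :: 'a poly) ^ (CHAR('a) ^ j) = monom 1 1 ^ (CHAR('a) ^ j) + 1 ^ (CHAR('a) ^ j)"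
      by (intro freshmans_dream') simp_all
    thus ?thesis using \<open>([:1,1:] :: 'a poly) = monom 1 1 + 1\<close> by simp
  qed
  hence "coeff (([:1,1:] :: 'a poly) ^ (CHAR('a) ^ j)) d = 0"
    using assms by (simp add: monom_power)
  thus ?thesis using coeff_linear_poly_power[of d "CHAR('a) ^ j" "1::'a" 1] assms by simp
qed




lemma pow_mat_add: "A \<in> carrier_mat n n \<Longrightarrow> A ^\<^sub>m (a+b) = A ^\<^sub>m a * A ^\<^sub>m b"
proof (induction b)
  case 0 then show ?case by simp
next
  case (Suc b)
  have "A ^\<^sub>m (a + Suc b) = (A ^\<^sub>m a * A ^\<^sub>m b) * A" using Suc by simp
  also have "\<dots> = A ^\<^sub>m a * (A ^\<^sub>m b * A)" using Suc.prems by (intro assoc_mult_mat) auto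
  finally show ?case by simp
qed

lemma pow_mat_mult: "A \<in> carrier_mat n n \<Longrightarrow> A ^\<^sub>m (a*b) = (A ^\<^sub>m a) ^\<^sub>m b"
proof (induction b)
  case 0 then show ?case by simp
next
  case (Suc b)
  have "A ^\<^sub>m (a * Suc b) = A ^\<^sub>m (a*b + a)" by (simp add: add.commute)
  also have "\<dots> = A ^\<^sub>m (a*b) * A ^\<^sub>m a" using Suc.prems by (rule pow_mat_add)
  finally show ?case using Suc by simp
qed

lemma one_pow_mat: "(1\<^sub>m n :: 'a::semiring_1 mat) ^\<^sub>m k = 1\<^sub>m n"
  by (induction k) auto

lemma pow_mat_one: "A \<in> carrier_mat n n \<Longrightarrow> A ^\<^sub>m 1 = A"
  by simp

lemma comm_pow:
  assumes "A \<in> carrier_mat n n" "C \<in> carrier_mat n n" "D \<in> carrier_mat n n" "A * C = D * A"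
  shows "A * C ^\<^sub>m j = D ^\<^sub>m j * A"
proof (induction j)
  case 0 then show ?case using assms by simp
next
  case (Suc j)
  have "A * C ^\<^sub>m Suc j = (A * C ^\<^sub>m j) * C" using assms
    by (simp add: assoc_mult_mat[of A n n "C ^\<^sub>m j" n C n])
  also have "\<dots> = (D ^\<^sub>m j * A) * C" using Suc by simp
  also have "\<dots> = D ^\<^sub>m j * (A * C)" using assms by (simp add: assoc_mult_mat[of "D ^\<^sub>m j" n n A n C n])
  also have "\<dots> = D ^\<^sub>m j * (D * A)" using assms by simp
  also have "\<dots> = D ^\<^sub>m Suc j * A" using assms by (simp add: assoc_mult_mat[of "D ^\<^sub>m j" n n D n A n])
  finally show ?case .
qed

lemma conj_iter:
  assumes "A \<in> carrier_mat n n" "B \<in> carrier_mat n n" "A * B = B ^\<^sub>m r * A"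
  shows "A ^\<^sub>m m * B = B ^\<^sub>m (r ^ m) * A ^\<^sub>m m"
proof (induction m)
  case 0 then show ?case using assms by simp
next
  case (Suc m)
  have "A ^\<^sub>m Suc m * B = A ^\<^sub>m m * (A * B)" using assms
    by (simp add: assoc_mult_mat[of "A ^\<^sub>m m" n n A n B n])
  also have "\<dots> = (A ^\<^sub>m m * B ^\<^sub>m r) * A" using assms
    by (simp add: assoc_mult_mat[of "A ^\<^sub>m m" n n "B ^\<^sub>m r" n A n])
  also have "A ^\<^sub>m m * B ^\<^sub>m r = (B ^\<^sub>m (r ^ m)) ^\<^sub>m r * A ^\<^sub>m m"
    using assms Suc by (intro comm_pow[of _ n]) auto
  also have "(B ^\<^sub>m (r ^ m)) ^\<^sub>m r = B ^\<^sub>m (r ^ Suc m)"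
    using assms by (simp add: pow_mat_mult[symmetric] mult.commute)
  finally show ?case using assms
    by (simp add: assoc_mult_mat[of "B ^\<^sub>m (r * r ^ m)" n n "A ^\<^sub>m m" n A n])
qed

lemma mult_entry:
  assumes "M \<in> carrier_mat n m" "N \<in> carrier_mat m r" "i < n" "j < r"
  shows "(M * N) $$ (i,j) = (\<Sum>l<m. M $$ (i,l) * N $$ (l,j))"
  using assms by (auto simp: scalar_prod_def lessThan_atLeast0 intro!: sum.cong)

lemma sum_delta_mult: "j < (n::nat) \<Longrightarrow> (\<Sum>l<n. (f l :: 'a::semiring_1) * (if l = j then 1 else 0)) = f j"
proof -
  assume j: "j < n"
  have "(\<Sum>l<n. (f l :: 'a::semiring_1) * (if l = j then 1 else 0)) = (\<Sum>l\<in>{..<n}. if l = j then f l else 0)"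
    by (intro sum.cong) auto
  also have "\<dots> = f j" using j by (subst sum.delta) auto
  finally show ?thesis .
qed




lemma sum_delta_r: "(\<Sum>l<(n::nat). (f l :: 'a::semiring_1) * (if l = j then 1 else 0)) = (if j < n then f j else 0)"
proof -
  have "(\<Sum>l<n. (f l :: 'a::semiring_1) * (if l = j then 1 else 0)) = (\<Sum>l\<in>{..<n}. if l = j then f l else 0)"
    by (intro sum.cong) auto
  also have "\<dots> = (if j < n then f j else 0)" by (subst sum.delta) auto
  finally show ?thesis .
qed

lemma sum_delta_l: "(\<Sum>l<(n::nat). (if l = j then 1 else 0) * (f l :: 'a::semiring_1)) = (if j < n then f j else 0)"
proof -
  have "(\<Sum>l<(n::nat). (if l = j then 1 else 0) * (f l :: 'a::semiring_1)) = (\<Sum>l\<in>{..<n}. if l = j then f l else 0)"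
    by (intro sum.cong) auto
  also have "\<dots> = (if j < n then f j else 0)" by (subst sum.delta) auto
  finally show ?thesis .
qed

lemma B_carrier: "(1\<^sub>m n + shift_mat n :: 'a::field mat) \<in> carrier_mat n n"
  by (simp add: shift_mat_def)

lemma B_entry: "i < n \<Longrightarrow> j < n \<Longrightarrow> (1\<^sub>m n + shift_mat n :: 'a::field mat) $$ (i,j) =
   (if i = j then 1 else 0) + (if j = i + 1 then 1 else 0)"
  by (simp add: shift_mat_def)

lemma multB:
  fixes M :: "'a::field mat"
  assumes M: "M \<in> carrier_mat n n" and ij: "i < n" "j < n"
  shows "(M * (1\<^sub>m n + shift_mat n)) $$ (i,j) = M $$ (i,j) + (if 0 < j then M $$ (i, j-1) else 0)"
proof -
  have "(M * (1\<^sub>m n + shift_mat n)) $$ (i,j) = (\<Sum>l<n. M $$ (i,l) * (1\<^sub>m n + shift_mat n :: 'a mat) $$ (l,j))"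
    using M B_carrier ij by (rule mult_entry)
  also have "\<dots> = (\<Sum>l<n. M $$ (i,l) * (if l = j then 1 else 0) + M $$ (i,l) * (if j = l + 1 then 1 else 0))"
    using ij by (intro sum.cong) (auto simp: B_entry distrib_left)
  also have "\<dots> = M $$ (i,j) + (\<Sum>l<n. M $$ (i,l) * (if j = l + 1 then 1 else 0))"
    using ij by (simp add: sum.distrib sum_delta_r)
  also have "(\<Sum>l<n. M $$ (i,l) * (if j = l + 1 then 1 else 0)) = (if 0 < j then M $$ (i, j-1) else 0)"
  proof (cases "j = 0")
    case True then show ?thesis by simp
  next
    case False
    have "(\<Sum>l<n. M $$ (i,l) * (if j = l + 1 then 1 else 0)) = (\<Sum>l<n. M $$ (i,l) * (if l = j - 1 then 1 else 0))"
      using False by (intro sum.cong) auto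
    also have "\<dots> = M $$ (i, j-1)" using ij by (simp add: sum_delta_r)
    finally show ?thesis using False by simp
  qed
  finally show ?thesis .
qed

lemma Bmult:
  fixes M :: "'a::field mat"
  assumes M: "M \<in> carrier_mat n n" and ij: "i < n" "j < n"
  shows "((1\<^sub>m n + shift_mat n) * M) $$ (i,j) = M $$ (i,j) + (if i + 1 < n then M $$ (i+1, j) else 0)"
proof -
  have "((1\<^sub>m n + shift_mat n) * M) $$ (i,j) = (\<Sum>l<n. (1\<^sub>m n + shift_mat n :: 'a mat) $$ (i,l) * M $$ (l,j))"
    using B_carrier M ij by (rule mult_entry)
  also have "\<dots> = (\<Sum>l<n. (if l = i then 1 else 0) * M $$ (l,j) + (if l = i + 1 then 1 else 0) * M $$ (l,j))"
    using ij by (intro sum.cong) (auto simp: B_entry distrib_right)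
  also have "\<dots> = M $$ (i,j) + (if i + 1 < n then M $$ (i+1, j) else 0)"
    using ij by (simp add: sum.distrib sum_delta_l)
  finally show ?thesis .
qed

lemma Bpow:
  fixes N :: nat
  assumes ij: "i < n" "j < n"
  shows "((1\<^sub>m n + shift_mat n :: 'a::field mat) ^\<^sub>m N) $$ (i,j) = (if i \<le> j then of_nat (N choose (j - i)) else 0)"
  using ij
proof (induction N arbitrary: i j)
  case 0 then show ?case by (auto simp: shift_mat_def binomial_eq_0)
next
  case (Suc N)
  have "((1\<^sub>m n + shift_mat n :: 'a::field mat) ^\<^sub>m Suc N) $$ (i,j) =
     ((1\<^sub>m n + shift_mat n :: 'a::field mat) ^\<^sub>m N) $$ (i,j) +
     (if 0 < j then ((1\<^sub>m n + shift_mat n :: 'a::field mat) ^\<^sub>m N) $$ (i,j-1) else 0)"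
    using Suc.prems by (simp add: multB[of _ n] B_carrier)
  also have "\<dots> = (if i \<le> j then of_nat (Suc N choose (j - i)) else 0)"
  proof (cases "i \<le> j")
    case True
    show ?thesis
    proof (cases "i = j")
      case True then show ?thesis using Suc by auto
    next
      case False
      then obtain d where d: "j - i = Suc d" "j - 1 - i = d" using True
        by (metis Suc_diff_Suc diff_Suc_1 diff_commute le_neq_implies_less)
      then show ?thesis using Suc True False by (simp add: of_nat_add)
    qed
  next
    case False then show ?thesis using Suc by auto
  qed
  finally show ?case .
qed




lemma Be:
  assumes p: "prime CHAR('a::field)" and n: "n = 1 + CHAR('a) ^ s" and ij: "i < n" "j < n"
  shows "((1\<^sub>m n + shift_mat n :: 'a mat) ^\<^sub>m (CHAR('a) ^ s)) $$ (i,j) =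
     (if i = j then 1 else if i = 0 \<and> j = CHAR('a) ^ s then 1 else 0)"
proof -
  let ?e = "CHAR('a) ^ s"
  have e0: "?e > 0" using p by (simp add: prime_gt_0_nat)
  show ?thesis
  proof (cases "i \<le> j")
    case True
    have "j - i \<le> ?e" using ij n by simp
    moreover {
      assume "j - i = 0" hence ?thesis using True ij by (simp add: Bpow)
    } moreover {
      assume d: "0 < j - i" "j - i < ?e"
      hence "(of_nat (?e choose (j - i)) :: 'a) = 0" using choose_char[OF p] by blast
      hence ?thesis using True ij d by (auto simp: Bpow)
    } moreover {
      assume d: "j - i = ?e"
      hence "i = 0" "j = ?e" using ij n by auto
      hence ?thesis using True ij d e0 by (auto simp: Bpow)
    }
    ultimately show ?thesis by linarith
  next
    case False then show ?thesis using ij by (auto simp: Bpow)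
  qed
qed

lemma Bepow:
  assumes p: "prime CHAR('a::field)" and n: "n = 1 + CHAR('a) ^ s" and ij: "i < n" "j < n"
  shows "((1\<^sub>m n + shift_mat n :: 'a mat) ^\<^sub>m (CHAR('a) ^ s * N)) $$ (i,j) =
     (if i = j then 1 else if i = 0 \<and> j = CHAR('a) ^ s then of_nat N else 0)"
proof -
  let ?e = "CHAR('a) ^ s"
  let ?Q = "(1\<^sub>m n + shift_mat n :: 'a mat) ^\<^sub>m ?e"
  have e0: "?e > 0" using p by (simp add: prime_gt_0_nat)
  have Qc: "?Q \<in> carrier_mat n n" using B_carrier by (rule pow_carrier_mat)
  have QN: "(?Q ^\<^sub>m N) $$ (i,j) = (if i = j then 1 else if i = 0 \<and> j = ?e then of_nat N else 0)"
    if "i < n" "j < n" for i j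
    using that
  proof (induction N arbitrary: i j)
    case 0 then show ?case using e0 by (auto simp: shift_mat_def)
  next
    case (Suc N)
    have "(?Q ^\<^sub>m Suc N) $$ (i,j) = (\<Sum>l<n. (?Q ^\<^sub>m N) $$ (i,l) * ?Q $$ (l,j))"
      using Suc.prems Qc by (simp add: mult_entry[of _ n n _ n])
    also have "\<dots> = (\<Sum>l<n. (?Q ^\<^sub>m N) $$ (i,l) * (if l = j then 1 else 0)
        + (if j = ?e then (?Q ^\<^sub>m N) $$ (i,l) * (if l = 0 then 1 else 0) else 0))"
      using Suc.prems e0 by (intro sum.cong) (auto simp: Be[OF p n])
    also have "\<dots> = (?Q ^\<^sub>m N) $$ (i,j) + (if j = ?e then (?Q ^\<^sub>m N) $$ (i,0) else 0)"
      using Suc.prems by (cases "j = ?e") (simp_all add: sum.distrib sum_delta_r)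
    also have "\<dots> = (if i = j then 1 else if i = 0 \<and> j = ?e then of_nat (Suc N) else 0)"
      using Suc e0 by (auto simp: of_nat_Suc)
    finally show ?case .
  qed
  show ?thesis using QN[OF ij] by (simp add: pow_mat_mult[OF B_carrier])
qed




lemma lastcol_pow:
  fixes A :: "'a::field mat"
  assumes Ac: "A \<in> carrier_mat n n" and n: "n > 0"
    and col: "\<forall>i<n. A $$ (i, n - 1) = (if i = n - 1 then 1 else 0)"
  shows "\<forall>i<n. (A ^\<^sub>m m) $$ (i, n - 1) = (if i = n - 1 then 1 else 0)"
proof (induction m)
  case 0 then show ?case using Ac by auto
next
  case (Suc m)
  show ?case
  proof (intro allI impI)
    fix i assume i: "i < n"
    have "(A ^\<^sub>m Suc m) $$ (i, n - 1) = (\<Sum>l<n. (A ^\<^sub>m m) $$ (i,l) * A $$ (l, n - 1))"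
      unfolding pow_mat.simps(2) by (rule mult_entry[of _ n n _ n]) (use Ac i n in auto)
    also have "\<dots> = (\<Sum>l<n. (A ^\<^sub>m m) $$ (i,l) * (if l = n - 1 then 1 else 0))"
      using col by (intro sum.cong) auto
    also have "\<dots> = (A ^\<^sub>m m) $$ (i, n - 1)" using n by (simp add: sum_delta_r)
    finally show "(A ^\<^sub>m Suc m) $$ (i, n - 1) = (if i = n - 1 then 1 else 0)" using Suc i by simp
  qed
qed

lemma comm_id:
  fixes C :: "'a::field mat"
  assumes Cc: "C \<in> carrier_mat n n" and n: "n > 0"
    and comm: "C * (1\<^sub>m n + shift_mat n) = (1\<^sub>m n + shift_mat n) * C"
    and col: "\<forall>i<n. C $$ (i, n - 1) = (if i = n - 1 then 1 else 0)"
  shows "C = 1\<^sub>m n"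
proof -
  have rec: "C $$ (i,j) = (if i + 1 < n then C $$ (i+1,j+1) else 0)" if "i < n" "j + 1 < n" for i j
  proof -
    have "(C * (1\<^sub>m n + shift_mat n)) $$ (i,j+1) = ((1\<^sub>m n + shift_mat n) * C) $$ (i,j+1)"
      using comm by simp
    thus ?thesis using that by (simp add: multB[OF Cc] Bmult[OF Cc])
  qed
  have main: "\<forall>i<n. C $$ (i, n - 1 - d) = (if i = n - 1 - d then 1 else 0)" if "d < n" for d
    using that
  proof (induction d)
    case 0 then show ?case using col by simp
  next
    case (Suc d)
    show ?case
    proof (intro allI impI)
      fix i assume i: "i < n"
      have "C $$ (i, n - 1 - Suc d) = (if i + 1 < n then C $$ (i+1, n - 1 - Suc d + 1) else 0)"
        using rec[of i "n - 1 - Suc d"] i Suc.prems by simp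
      also have "n - 1 - Suc d + 1 = n - 1 - d" using Suc.prems by simp
      finally show "C $$ (i, n - 1 - Suc d) = (if i = n - 1 - Suc d then 1 else 0)"
        using Suc i by auto
    qed
  qed
  show ?thesis
  proof (rule eq_matI)
    fix i j assume ij: "i < dim_row (1\<^sub>m n :: 'a mat)" "j < dim_col (1\<^sub>m n :: 'a mat)"
    hence "C $$ (i, n - 1 - (n - 1 - j)) = (if i = n - 1 - (n - 1 - j) then 1 else 0)"
      using main[of "n - 1 - j"] n by auto
    moreover have "n - 1 - (n - 1 - j) = j" using ij by auto
    ultimately show "C $$ (i,j) = 1\<^sub>m n $$ (i,j)" using ij by simp
  qed (use Cc in auto)
qed




theorem proposition3p6:
  fixes p s k n :: nat and A Ainv B :: "'a :: field mat"
  assumes "prime p" and "odd p" and "CHAR('a) = p"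
    and "s \<ge> 1" and "n = 1 + p ^ s"
    and "B = 1\<^sub>m n + shift_mat n"
    and "1 \<le> k" and "k \<le> s"
    and "A \<in> unitriangular_mat n"
    and "\<forall>i<n. A $$ (i, n - 1) = (if i = n - 1 then 1 else 0)"
    and "Ainv \<in> carrier_mat n n" and "inverts_mat A Ainv" and "inverts_mat Ainv A"
    and "A * B * Ainv = B ^\<^sub>m (1 + p ^ k)"
  shows "mat_order n A = p ^ (s + 1 - k)"
proof -
  note p = assms(1,2)
  have pC: "prime CHAR('a)" using assms(1,3) by simp
  have nC: "n = 1 + CHAR('a) ^ s" using assms(3,5) by simp
  define e where "e = p ^ s"
  define r where "r = 1 + p ^ k"
  have p3: "p \<ge> 3" using prime_ge_2_nat[OF p(1)] p(2) by (cases "p = 2") auto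
  have "p ^ 1 \<le> p ^ s" using power_increasing[OF assms(4), of p] p3 by simp
  hence e3: "e \<ge> 3" unfolding e_def using p3 by simp
  have n: "n = 1 + e" "n > 0" using assms(5) e_def by auto
  have Bc: "B \<in> carrier_mat n n" using assms(6) B_carrier by simp
  have Ac: "A \<in> carrier_mat n n" using assms(9) by (simp add: unitriangular_mat_def)
  have AiA: "Ainv * A = 1\<^sub>m n" using assms(11,13) by (simp add: inverts_mat_def)
  have AB: "A * B = B ^\<^sub>m r * A"
  proof -
    have "A * B * Ainv * A = B ^\<^sub>m r * A" using assms(14) r_def by simp
    moreover have "A * B * Ainv * A = A * B * (Ainv * A)"
      by (rule assoc_mult_mat[of _ n n _ n _ n]) (use Ac Bc assms(11) in auto)
    ultimately show ?thesis using AiA Ac Bc by simp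
  qed
  have iter: "A ^\<^sub>m m * B = B ^\<^sub>m (r ^ m) * A ^\<^sub>m m" for m
    using conj_iter[OF Ac Bc AB] .
  have Bent: "(B ^\<^sub>m (e * N)) $$ (i,j) = (if i = j then 1 else if i = 0 \<and> j = e then of_nat N else 0)"
    if "i < n" "j < n" for N i j
    using Bepow[OF pC nC that, of N] assms(3,6) e_def by simp
  have Bone: "B ^\<^sub>m (e * (p * z)) = 1\<^sub>m n" for z
  proof (rule eq_matI)
    fix i j assume "i < dim_row (1\<^sub>m n :: 'a mat)" "j < dim_col (1\<^sub>m n :: 'a mat)"
    hence ij: "i < n" "j < n" by auto
    have "(of_nat (p * z) :: 'a) = 0" using assms(3) by (simp add: of_nat_eq_0_iff_char_dvd)
    thus "(B ^\<^sub>m (e * (p * z))) $$ (i,j) = 1\<^sub>m n $$ (i,j)" using Bent[OF ij] ij by auto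
  qed (use Bc in auto)
  define P where "P = p ^ (s + 1 - k)"
  have AP: "A ^\<^sub>m P = 1\<^sub>m n"
  proof -
    obtain z where z: "r ^ P = 1 + p ^ (k + (s + 1 - k)) * z"
      using lte_iter[OF p assms(7), of "s + 1 - k"] unfolding r_def P_def by blast
    have "k + (s + 1 - k) = s + 1" using assms(8) by simp
    hence rP: "r ^ P = 1 + e * (p * z)" using z unfolding e_def by simp
    have "B ^\<^sub>m (r ^ P) = B ^\<^sub>m 1 * B ^\<^sub>m (e * (p * z))"
      unfolding rP using Bc by (rule pow_mat_add)
    also have "\<dots> = B" using Bc Bone by simp
    finally have "A ^\<^sub>m P * B = B * A ^\<^sub>m P" using iter[of P] by simp
    moreover have "\<forall>i<n. (A ^\<^sub>m P) $$ (i, n - 1) = (if i = n - 1 then 1 else 0)"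
      using lastcol_pow[OF Ac n(2) assms(10)] .
    ultimately show ?thesis using comm_id[of "A ^\<^sub>m P" n] Ac n(2) assms(6) by auto
  qed
  have Anot: "A ^\<^sub>m (p ^ (s - k)) \<noteq> 1\<^sub>m n"
  proof
    assume A1: "A ^\<^sub>m (p ^ (s - k)) = 1\<^sub>m n"
    obtain z where z: "r ^ (p ^ (s - k)) = 1 + p ^ (k + (s - k)) * z" "\<not> p dvd z"
      using lte_iter[OF p assms(7), of "s - k"] unfolding r_def by blast
    have "k + (s - k) = s" using assms(8) by simp
    hence rP: "r ^ (p ^ (s - k)) = e * z + 1" using z unfolding e_def by simp
    have "B = B ^\<^sub>m (r ^ (p ^ (s - k)))" using iter[of "p ^ (s - k)"] A1 Bc by simp
    also have "\<dots> = B ^\<^sub>m (e * z) * B" unfolding rP by simp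
    finally have eq: "B ^\<^sub>m (e * z) * B = B" by simp
    have "(B ^\<^sub>m (e * z) * B) $$ (0, e) = (B ^\<^sub>m (e * z)) $$ (0, e) + (B ^\<^sub>m (e * z)) $$ (0, e - 1)"
      using multB[of "B ^\<^sub>m (e * z)" n 0 e] Bc n e3 assms(6) by simp
    also have "\<dots> = of_nat z" using Bent n e3 by simp
    finally have "(of_nat z :: 'a) = B $$ (0, e)" using eq by simp
    also have "\<dots> = 0" using B_entry[of 0 n e] assms(6) n e3 by simp
    finally have "(of_nat z :: 'a) = 0" .
    hence "p dvd z" using assms(3) by (simp add: of_nat_eq_0_iff_char_dvd)
    thus False using z(2) by simp
  qed
  have P0: "P > 0" unfolding P_def using p by (simp add: prime_gt_0_nat)
  have minimal: "P \<le> m" if m: "0 < m" "A ^\<^sub>m m = 1\<^sub>m n" for m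
  proof (rule ccontr)
    assume "\<not> P \<le> m"
    hence mP: "m < P" by simp
    obtain x y where xy: "m * x = P * y + gcd m P" using bezout_nat[of m P] m by auto
    define g where "g = gcd m P"
    have "A ^\<^sub>m (m * x) = 1\<^sub>m n" using m Ac by (simp add: pow_mat_mult one_pow_mat)
    moreover have "A ^\<^sub>m (P * y + g) = A ^\<^sub>m g"
      using Ac AP by (simp add: pow_mat_add pow_mat_mult one_pow_mat)
    ultimately have Ag: "A ^\<^sub>m g = 1\<^sub>m n" using xy g_def by simp
    have "g dvd p ^ (s + 1 - k)" unfolding g_def P_def by simp
    then obtain j where j: "j \<le> s + 1 - k" "g = p ^ j" using divides_primepow_nat[OF p(1)] by blast
    have "g \<le> m" unfolding g_def using m by (simp add: gcd_le1_nat)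
    hence "p ^ j < p ^ (s + 1 - k)" using mP j P_def by simp
    hence "j < s + 1 - k" using power_strict_increasing_iff[OF prime_gt_1_nat[OF p(1)]] by blast
    hence jle: "j \<le> s - k" using assms(8) by simp
    have "s - k = j + (s - k - j)" using jle by simp
    hence "p ^ (s - k) = g * p ^ (s - k - j)" using j by (metis power_add)
    hence "A ^\<^sub>m (p ^ (s - k)) = 1\<^sub>m n" using Ag Ac by (simp add: pow_mat_mult one_pow_mat)
    thus False using Anot by simp
  qed
  show ?thesis
    unfolding mat_order_def P_def[symmetric]
    by (rule Least_equality) (use P0 AP minimal in auto)
qed


end
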